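(* Let $n\ge2$. The space $\mathrm{SL}(n,\mathbb R)/\mathrm{SL}(n,\mathbb Z)$ contains pairs of points which are not midpoint blockable. In particular, no point $m\in\mathrm{SL}(n,\mathbb R)/\mathrm{SL}(n,\mathbb Z)$ is midpoint blockable away from itself.
   Context: For a connected Lie group $G$ with Lie algebra $\mathfrak g$, lattice $\Gamma$, $M=G/\Gamma$: connecting curves for $m_1,m_2$ are $c(t)=\exp(tx)\cdot m_1$, $0\le t\le1$, $x\in\mathfrak g$, with $c(0)=m_1,c(1)=m_2$. The pair $m_1,m_2$ is midpoint blockable if $\{c(1/2): c \text{ a connecting curve}\}$ is finite; $m$ is midpoint blockable away from itself if the pair $m,m$ is midpoint blockable. *)

theory Defs
  imports "HOL-Analysis.Analysis"
begin

text \<open>Matrices are real n-by-n matrices, with n encoded by the finite index type 'n.\<close>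

primrec mpow :: "real^'n^'n \<Rightarrow> nat \<Rightarrow> real^'n^'n" where
  "mpow A 0 = mat 1"
| "mpow A (Suc k) = A ** mpow A k"

definition mexp :: "real^'n^'n \<Rightarrow> real^'n^'n" where
  "mexp A = (\<Sum>k. (1 / fact k) *\<^sub>R mpow A k)"

definition SLR :: "(real^'n^'n) set" where
  "SLR = {A. det A = 1}"

definition SLZ :: "(real^'n^'n) set" where
  "SLZ = {A \<in> SLR. \<forall>i j. A $ i $ j \<in> \<int>}"

definition slR :: "(real^'n^'n) set" where
  "slR = {X. trace X = 0}"

text \<open>Points of M = G / Gamma are the cosets g Gamma.\<close>
definition coset :: "real^'n^'n \<Rightarrow> (real^'n^'n) set" where
  "coset g = {g ** h | h. h \<in> SLZ}"

definition Mspace :: "(real^'n^'n) set set" where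
  "Mspace = coset ` SLR"

definition act :: "real^'n^'n \<Rightarrow> (real^'n^'n) set \<Rightarrow> (real^'n^'n) set" where
  "act g m = (\<lambda>h. g ** h) ` m"

definition connecting_curve ::
  "(real^'n^'n) set \<Rightarrow> (real^'n^'n) set \<Rightarrow> (real \<Rightarrow> (real^'n^'n) set) \<Rightarrow> bool" where
  "connecting_curve m1 m2 c \<longleftrightarrow>
     (\<exists>x \<in> slR. \<forall>t. c t = act (mexp (t *\<^sub>R x)) m1) \<and> c 0 = m1 \<and> c 1 = m2"

definition midpoint_blockable :: "(real^'n^'n) set \<Rightarrow> (real^'n^'n) set \<Rightarrow> bool" where
  "midpoint_blockable m1 m2 \<longleftrightarrow> finite {c (1/2) | c. connecting_curve m1 m2 c}"

definition midpoint_blockable_away_from_itself :: "(real^'n^'n) set \<Rightarrow> bool" where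
  "midpoint_blockable_away_from_itself m \<longleftrightarrow> midpoint_blockable m m"

end

theory Submission
  imports Defs
begin


definition blk :: "'n \<Rightarrow> 'n \<Rightarrow> real \<Rightarrow> real \<Rightarrow> real \<Rightarrow> real \<Rightarrow> real \<Rightarrow> real^'n^'n" where
 "blk i0 i1 a b c d e = (\<chi> i j. if i=i0 \<and> j=i0 then a else if i=i0 \<and> j=i1 then b else
     if i=i1 \<and> j=i0 then c else if i=i1 \<and> j=i1 then d else if i=j then e else 0)"

lemma rest_sum:
  "(\<Sum>j\<in>(UNIV::'n::finite set) - {i0,i1}. (if i=j then e else 0) * (if j=k then e' else (0::real)))
    = (if i = k \<and> i \<notin> {i0,i1} then e*e' else 0)"
proof -
  have "(\<Sum>j\<in>(UNIV::'n set) - {i0,i1}. (if i=j then e else 0) * (if j=k then e' else (0::real)))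
       = (\<Sum>j\<in>(UNIV::'n set) - {i0,i1}. if j = i then (if i=k then e*e' else 0) else 0)"
    by (rule sum.cong) auto
  also have "\<dots> = (if i = k \<and> i \<notin> {i0,i1} then e*e' else 0)"
    by (simp add: sum.delta')
  finally show ?thesis .
qed

lemma blk_mult:
  assumes "i0 \<noteq> (i1::'n::finite)"
  shows "blk i0 i1 a b c d e ** blk i0 i1 a' b' c' d' e' =
         blk i0 i1 (a*a'+b*c') (a*b'+b*d') (c*a'+d*c') (c*b'+d*d') (e*e')"
proof -
  have U: "(UNIV::'n set) = insert i0 (insert i1 (UNIV - {i0,i1}))" by auto
  have S: "\<And>f::'n\<Rightarrow>real. sum f UNIV = f i0 + f i1 + sum f (UNIV - {i0,i1})"
    using assms by (subst U, simp add: sum.insert)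
  have R: "\<And>i k. (\<Sum>j\<in>(UNIV::'n set) - {i0,i1}. blk i0 i1 a b c d e $ i $ j * blk i0 i1 a' b' c' d' e' $ j $ k)
       = (if i = k \<and> i \<notin> {i0,i1} then e*e' else 0)"
  proof -
    fix i k
    have "(\<Sum>j\<in>(UNIV::'n set) - {i0,i1}. blk i0 i1 a b c d e $ i $ j * blk i0 i1 a' b' c' d' e' $ j $ k)
      = (\<Sum>j\<in>(UNIV::'n set) - {i0,i1}. (if i=j then e else 0) * (if j=k then e' else (0::real)))"
      by (rule sum.cong) (auto simp: blk_def)
    then show "?thesis i k" by (simp only: rest_sum)
  qed
  show ?thesis
    unfolding vec_eq_iff matrix_matrix_mult_def
    apply (simp only: vec_lambda_beta)
    apply (intro allI)
    apply (subst S)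
    apply (subst R)
    using assms by (auto simp: blk_def)
qed


lemma mat1_blk: "i0 \<noteq> i1 \<Longrightarrow> (mat 1 :: real^'n^'n) = blk i0 i1 1 0 0 1 1"
  unfolding blk_def mat_def by (rule arg_cong[where f=vec_lambda], rule ext)+ auto
lemma add_blk: "i0\<noteq>i1 \<Longrightarrow> blk i0 i1 a b c d e + blk i0 i1 a' b' c' d' e' = blk i0 i1 (a+a') (b+b') (c+c') (d+d') (e+e')"
  unfolding blk_def vec_eq_iff by auto
lemma scaleR_blk: "i0\<noteq>i1 \<Longrightarrow> t *\<^sub>R blk i0 i1 a b c d e = blk i0 i1 (t*a) (t*b) (t*c) (t*d) (t*e)"
  unfolding blk_def vec_eq_iff by auto
lemma mult_scaleR_right: "(P::real^'n^'m) ** (a *\<^sub>R (M::real^'k^'n)) = a *\<^sub>R (P ** M)"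
  by (simp add: vec_eq_iff matrix_matrix_mult_def sum_distrib_left mult.left_commute)

lemma mult_scaleR_left: "(a *\<^sub>R (M::real^'n^'m)) ** (P::real^'k^'n) = a *\<^sub>R (M ** P)"
  by (simp add: vec_eq_iff matrix_matrix_mult_def sum_distrib_left mult.assoc)

lemma mpow_conj:
  assumes "Pv ** P = (mat 1 :: real^'n^'n)" "P ** Pv = mat 1"
  shows "mpow (P ** y ** Pv) k = P ** mpow y k ** Pv"
proof (induction k)
  case 0
  then show ?case using assms by (simp add: matrix_mul_rid)
next
  case (Suc k)
  have "mpow (P ** y ** Pv) (Suc k) = (P ** y ** Pv) ** (P ** mpow y k ** Pv)"
    using Suc by simp
  also have "\<dots> = P ** y ** (Pv ** P) ** mpow y k ** Pv"
    by (simp only: matrix_mul_assoc)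
  also have "\<dots> = P ** mpow y (Suc k) ** Pv"
    using assms by (simp add: matrix_mul_assoc matrix_mul_lid)
  finally show ?case .
qed

lemma mpow_rot:
  assumes "i0 \<noteq> (i1::'n::finite)"
  shows "mpow (blk i0 i1 0 (-\<theta>) \<theta> 0 0) k = blk i0 i1 (fact k * cos_coeff k * \<theta>^k)
     (-(fact k * sin_coeff k * \<theta>^k)) (fact k * sin_coeff k * \<theta>^k) (fact k * cos_coeff k * \<theta>^k)
     (if k = 0 then 1 else 0)"
proof (induction k)
  case 0
  then show ?case using assms by (simp add: mat1_blk cos_coeff_def sin_coeff_def)
next
  case (Suc k)
  have e1: "fact (Suc k) * cos_coeff (Suc k) * \<theta>^(Suc k) = - \<theta> * (fact k * sin_coeff k * \<theta>^k)"
    by (simp add: cos_coeff_Suc field_simps)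
  have e2: "fact (Suc k) * sin_coeff (Suc k) * \<theta>^(Suc k) = \<theta> * (fact k * cos_coeff k * \<theta>^k)"
    by (simp add: sin_coeff_Suc field_simps)
  show ?case
    apply (simp only: mpow.simps Suc blk_mult[OF assms])
    apply (subst e1, subst e1, subst e2, subst e2)
    by simp
qed
lemma matrix_add_rdistrib': "((B + C) ** (A::real^'k^'n)) = (B ** A) + (C ** (A::real^'k^'n))" for B C :: "real^'n^'m"
  by (simp add: vec_eq_iff matrix_matrix_mult_def sum.distrib[symmetric] distrib_right)

lemma blk_decomp:
  assumes "i0 \<noteq> i1"
  shows "blk i0 i1 a b c d e = a *\<^sub>R blk i0 i1 1 0 0 0 0 + b *\<^sub>R blk i0 i1 0 1 0 0 0
   + c *\<^sub>R blk i0 i1 0 0 1 0 0 + d *\<^sub>R blk i0 i1 0 0 0 1 0 + e *\<^sub>R blk i0 i1 0 0 0 0 1"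
  using assms by (simp add: scaleR_blk add_blk)

lemma conj_lin:
  assumes "i0 \<noteq> (i1::'n::finite)"
  shows "(P::real^'n^'n) ** blk i0 i1 a b c d e ** Pv =
     a *\<^sub>R (P ** blk i0 i1 1 0 0 0 0 ** Pv) + b *\<^sub>R (P ** blk i0 i1 0 1 0 0 0 ** Pv)
   + c *\<^sub>R (P ** blk i0 i1 0 0 1 0 0 ** Pv) + d *\<^sub>R (P ** blk i0 i1 0 0 0 1 0 ** Pv)
   + e *\<^sub>R (P ** blk i0 i1 0 0 0 0 1 ** Pv)"
  apply (subst blk_decomp[OF assms])
  by (simp only: matrix_add_ldistrib matrix_add_rdistrib' mult_scaleR_left mult_scaleR_right)

lemma mexp_rot:
  fixes P Pv :: "real^'n::finite^'n"
  assumes "i0 \<noteq> (i1::'n::finite)" "Pv ** P = (mat 1 :: real^'n^'n)" "P ** Pv = mat 1"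
  shows "mexp (P ** blk i0 i1 0 (-\<theta>) \<theta> 0 0 ** Pv) = P ** blk i0 i1 (cos \<theta>) (- sin \<theta>) (sin \<theta>) (cos \<theta>) 1 ** Pv"
proof -
  let ?X = "\<lambda>a b c d e. P ** blk i0 i1 a b c d e ** Pv"
  have trm: "(1 / fact k) *\<^sub>R mpow (P ** blk i0 i1 0 (-\<theta>) \<theta> 0 0 ** Pv) k =
     (cos_coeff k * \<theta>^k) *\<^sub>R ?X 1 0 0 0 0 + (- (sin_coeff k * \<theta>^k)) *\<^sub>R ?X 0 1 0 0 0
     + (sin_coeff k * \<theta>^k) *\<^sub>R ?X 0 0 1 0 0 + (cos_coeff k * \<theta>^k) *\<^sub>R ?X 0 0 0 1 0
     + (if k = 0 then 1 else 0) *\<^sub>R ?X 0 0 0 0 1" (is "_ = ?rhs") for k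
  proof -
    have "(1 / fact k) *\<^sub>R mpow (P ** blk i0 i1 0 (-\<theta>) \<theta> 0 0 ** Pv) k
       = P ** ((1 / fact k) *\<^sub>R blk i0 i1 (fact k * cos_coeff k * \<theta>^k)
     (-(fact k * sin_coeff k * \<theta>^k)) (fact k * sin_coeff k * \<theta>^k) (fact k * cos_coeff k * \<theta>^k)
     (if k = 0 then 1 else 0)) ** Pv"
      by (simp only: mpow_conj[OF assms(2,3)] mpow_rot[OF assms(1)] mult_scaleR_left mult_scaleR_right)
    also have "\<dots> = ?X (cos_coeff k * \<theta>^k) (- (sin_coeff k * \<theta>^k)) (sin_coeff k * \<theta>^k) (cos_coeff k * \<theta>^k) (if k = 0 then 1 else 0)"
      by (simp add: scaleR_blk[OF assms(1)])
    also have "\<dots> = ?rhs" by (rule conj_lin[OF assms(1)])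
    finally show ?thesis .
  qed
  have cc: "(\<lambda>k. cos_coeff k * \<theta>^k) sums cos \<theta>" using cos_converges[of \<theta>] by simp
  have ss: "(\<lambda>k. sin_coeff k * \<theta>^k) sums sin \<theta>" using sin_converges[of \<theta>] by simp
  have dd: "(\<lambda>k. if k = 0 then (1::real) else 0) sums 1" using sums_single[of 0 "\<lambda>_. (1::real)"] by simp
  have "(\<lambda>k. (1 / fact k) *\<^sub>R mpow (P ** blk i0 i1 0 (-\<theta>) \<theta> 0 0 ** Pv) k) sums
     (cos \<theta> *\<^sub>R ?X 1 0 0 0 0 + (- sin \<theta>) *\<^sub>R ?X 0 1 0 0 0
     + sin \<theta> *\<^sub>R ?X 0 0 1 0 0 + cos \<theta> *\<^sub>R ?X 0 0 0 1 0 + 1 *\<^sub>R ?X 0 0 0 0 1)"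
    unfolding trm
    by (intro sums_add sums_scaleR_left cc ss dd sums_minus)
  then have "mexp (P ** blk i0 i1 0 (-\<theta>) \<theta> 0 0 ** Pv) = cos \<theta> *\<^sub>R ?X 1 0 0 0 0 + (- sin \<theta>) *\<^sub>R ?X 0 1 0 0 0
     + sin \<theta> *\<^sub>R ?X 0 0 1 0 0 + cos \<theta> *\<^sub>R ?X 0 0 0 1 0 + 1 *\<^sub>R ?X 0 0 0 0 1"
    unfolding mexp_def by (rule sums_unique[symmetric])
  also have "\<dots> = P ** blk i0 i1 (cos \<theta>) (- sin \<theta>) (sin \<theta>) (cos \<theta>) 1 ** Pv"
    by (rule conj_lin[OF assms(1), symmetric])
  finally show ?thesis .
qed


lemma act_coset: "act A (coset B) = coset (A ** B)"
proof -
  have "act A (coset B) = {A ** (B ** h) | h. h \<in> SLZ}" unfolding act_def coset_def by blast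
  then show ?thesis unfolding coset_def by (simp add: matrix_mul_assoc)
qed

lemma SLZ_mult: "A \<in> SLZ \<Longrightarrow> B \<in> SLZ \<Longrightarrow> A ** B \<in> SLZ"
  unfolding SLZ_def SLR_def
  by (simp add: det_mul) (simp add: matrix_matrix_mult_def Ints_sum Ints_mult)

lemma I_SLZ: "mat 1 \<in> SLZ"
proof -
  have "\<forall>i j. (mat 1 :: real^'n^'n) $ i $ j \<in> \<int>"
  proof (intro allI)
    fix i j :: 'n show "(mat 1 :: real^'n^'n) $ i $ j \<in> \<int>" by (cases "i=j") (simp_all add: mat_def)
  qed
  then show ?thesis unfolding SLZ_def SLR_def by simp
qed

lemma coset_absorb:
  assumes "A \<in> SLZ" "A ** A = mat 1"
  shows "coset (g ** A) = coset g"
proof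
  show "coset (g ** A) \<subseteq> coset g"
  proof
    fix x assume "x \<in> coset (g ** A)"
    then obtain h where h: "h \<in> SLZ" "x = g ** A ** h" unfolding coset_def by auto
    then have "x = g ** (A ** h)" by (simp add: matrix_mul_assoc)
    then show "x \<in> coset g" unfolding coset_def using SLZ_mult[OF assms(1) h(1)] by auto
  qed
  show "coset g \<subseteq> coset (g ** A)"
  proof
    fix x assume "x \<in> coset g"
    then obtain h where h: "h \<in> SLZ" "x = g ** h" unfolding coset_def by auto
    have "A ** (A ** h) = h" using assms(2) by (metis matrix_mul_assoc matrix_mul_lid)
    then have "x = (g ** A) ** (A ** h)" using h by (metis matrix_mul_assoc)
    then show "x \<in> coset (g ** A)" unfolding coset_def using SLZ_mult[OF assms(1) h(1)] by auto
  qed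
qed


lemma blk_00: "i0 \<noteq> i1 \<Longrightarrow> blk i0 i1 a b c d e $ i0 $ i0 = a" by (simp add: blk_def)
lemma blk_11: "i0 \<noteq> i1 \<Longrightarrow> blk i0 i1 a b c d e $ i1 $ i1 = d" by (simp add: blk_def)

lemma ints_ratio:
  fixes x y :: real
  assumes "x > 0" "y > 0" "x / y \<in> \<int>" "y / x \<in> \<int>"
  shows "x = y"
proof -
  obtain m where m: "x / y = of_int m" using assms(3) Ints_cases by blast
  obtain m' where m': "y / x = of_int m'" using assms(4) Ints_cases by blast
  have "of_int (m * m') = (x/y) * (y/x)" using m m' by simp
  also have "\<dots> = (1::real)" using assms by simp
  finally have "m * m' = 1" by linarith
  moreover have "m > 0" using m assms by (metis divide_pos_pos of_int_0_less_iff)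
  ultimately have "m = 1" using pos_zmult_eq_1_iff by blast
  then show ?thesis using m assms by simp
qed

lemma trace_rot: "i0 \<noteq> i1 \<Longrightarrow> trace (blk i0 i1 0 a b 0 0) = 0"
  unfolding trace_def by (intro sum.neutral) (auto simp: blk_def)

lemma trace_conj:
  fixes P Pv y :: "real^'n::finite^'n"
  assumes "Pv ** P = mat 1"
  shows "trace (P ** y ** Pv) = trace y"
  by (metis assms matrix_mul_assoc matrix_mul_lid trace_mul_sym)


lemma blk_entry: "i0 \<noteq> i1 \<Longrightarrow> blk i0 i1 a b c d e $ i $ j \<in> {a,b,c,d,e,0}"
  unfolding blk_def by (cases "i=i0"; cases "j=i0"; cases "i=i1"; cases "j=i1"; cases "i = j") simp_all
lemma blk_offdiag: "i0 \<noteq> i1 \<Longrightarrow> i \<noteq> j \<Longrightarrow> blk i0 i1 a 0 0 d e $ i $ j = 0"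
  unfolding blk_def by (cases "i=i0"; cases "j=i0"; cases "i=i1"; cases "j=i1") simp_all
lemma blk_diag_out: "i \<noteq> i0 \<Longrightarrow> i \<noteq> i1 \<Longrightarrow> blk i0 i1 a b c d e $ i $ i = e"
  unfolding blk_def by simp


lemma R_SLZ:
  assumes "i0 \<noteq> (i1::'n::finite)"
  shows "blk i0 i1 (-1) 0 0 (-1) 1 \<in> SLZ"
proof -
  let ?R = "blk i0 i1 (-1) 0 0 (-1) 1 :: real^'n^'n"
  have U: "(UNIV::'n set) = insert i0 (insert i1 (UNIV - {i0,i1}))" by auto
  have "det ?R = prod (\<lambda>i. ?R$i$i) UNIV"
    by (rule det_diagonal) (rule blk_offdiag[OF assms])
  also have "\<dots> = ?R$i0$i0 * (?R$i1$i1 * prod (\<lambda>i. ?R$i$i) (UNIV - {i0,i1}))"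
    using assms by (subst U, simp add: prod.insert)
  also have "prod (\<lambda>i. ?R$i$i) (UNIV - {i0,i1}) = 1"
    by (rule prod.neutral) (simp add: blk_diag_out)
  finally have "det ?R = 1" using assms by (simp add: blk_00 blk_11)
  moreover have "\<forall>i j. ?R $ i $ j \<in> \<int>"
  proof (intro allI)
    fix i j
    have "?R $ i $ j \<in> {-1, 0, 0, -1, 1, 0}" by (rule blk_entry[OF assms])
    then show "?R $ i $ j \<in> \<int>" by auto
  qed
  ultimately show ?thesis unfolding SLZ_def SLR_def by auto
qed

lemma blk_cong: "a = a' \<Longrightarrow> b = b' \<Longrightarrow> c = c' \<Longrightarrow> d = d' \<Longrightarrow> e = e' \<Longrightarrow>
   blk i0 i1 a b c d e = blk i0 i1 a' b' c' d' e'" by simp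



lemma main_lemma:
  fixes g :: "real^'n::finite^'n"
  assumes i01: "i0 \<noteq> (i1::'n)" and dg: "det g = 1"
  shows "\<not> midpoint_blockable (coset g) (coset g)"
proof
  assume fin: "midpoint_blockable (coset g) (coset g)"
  obtain gi where gi: "g ** gi = mat 1" "gi ** g = mat 1"
    using dg invertible_det_nz[of g] unfolding invertible_def by auto
  define Q where "Q s = (blk i0 i1 s 0 0 (1/s) 1 :: real^'n^'n)" for s::real
  define Qi where "Qi s = (blk i0 i1 (1/s) 0 0 s 1 :: real^'n^'n)" for s::real
  define K where "K s = (blk i0 i1 0 (-(s^2)) (1/s^2) 0 1 :: real^'n^'n)" for s::real
  define Kv where "Kv s = (blk i0 i1 0 (s^2) (-(1/s^2)) 0 1 :: real^'n^'n)" for s::real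
  define X where "X s = (g ** Q s) ** blk i0 i1 0 (-pi) pi 0 0 ** (Qi s ** gi)" for s
  have I1: "(mat 1 :: real^'n^'n) = blk i0 i1 1 0 0 1 1" by (rule mat1_blk[OF i01])
  have QQi: "Qi s ** Q s = mat 1" "Q s ** Qi s = mat 1" if "s \<noteq> 0" for s
    using that unfolding Q_def Qi_def I1 by (simp_all add: blk_mult[OF i01])
  have PP1: "(Qi s ** gi) ** (g ** Q s) = mat 1" if "s \<noteq> 0" for s
  proof -
    have "(Qi s ** gi) ** (g ** Q s) = Qi s ** (gi ** g) ** Q s" by (simp add: matrix_mul_assoc)
    also have "\<dots> = mat 1" using gi QQi[OF that] by simp
    finally show ?thesis .
  qed
  have PP2: "(g ** Q s) ** (Qi s ** gi) = mat 1" if "s \<noteq> 0" for s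
  proof -
    have "(g ** Q s) ** (Qi s ** gi) = g ** (Q s ** Qi s) ** gi" by (simp add: matrix_mul_assoc)
    also have "\<dots> = mat 1" using gi QQi[OF that] by simp
    finally show ?thesis .
  qed
  have curve: "act (mexp (t *\<^sub>R X s)) (coset g) =
     coset (g ** blk i0 i1 (cos (t*pi)) (-(s^2) * sin (t*pi)) (sin (t*pi) / s^2) (cos (t*pi)) 1)"
    if "s \<noteq> 0" for s t
  proof -
    have "t *\<^sub>R X s = (g ** Q s) ** blk i0 i1 0 (-(t*pi)) (t*pi) 0 0 ** (Qi s ** gi)"
    proof -
      have "blk i0 i1 0 (-(t*pi)) (t*pi) 0 0 = t *\<^sub>R blk i0 i1 0 (-pi) pi 0 0"
        by (simp add: scaleR_blk[OF i01])
      then show ?thesis unfolding X_def by (simp only: mult_scaleR_left mult_scaleR_right)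
    qed
    then have "mexp (t *\<^sub>R X s) = (g ** Q s) ** blk i0 i1 (cos (t*pi)) (- sin (t*pi)) (sin (t*pi)) (cos (t*pi)) 1 ** (Qi s ** gi)"
      using mexp_rot[OF i01 PP1[OF that] PP2[OF that]] by simp
    then have "mexp (t *\<^sub>R X s) ** g = g ** (Q s ** blk i0 i1 (cos (t*pi)) (- sin (t*pi)) (sin (t*pi)) (cos (t*pi)) 1 ** Qi s)"
    proof -
      let ?M = "g ** Q s ** blk i0 i1 (cos (t*pi)) (- sin (t*pi)) (sin (t*pi)) (cos (t*pi)) 1 ** Qi s"
      have "mexp (t *\<^sub>R X s) = ?M ** gi" using \<open>mexp _ = _\<close> by (simp add: matrix_mul_assoc)
      then have "mexp (t *\<^sub>R X s) ** g = ?M ** (gi ** g)" by (simp add: matrix_mul_assoc)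
      then show ?thesis using gi(2) by (simp add: matrix_mul_assoc)
    qed
    also have "Q s ** blk i0 i1 (cos (t*pi)) (- sin (t*pi)) (sin (t*pi)) (cos (t*pi)) 1 ** Qi s
       = blk i0 i1 (cos (t*pi)) (-(s^2) * sin (t*pi)) (sin (t*pi) / s^2) (cos (t*pi)) 1"
      unfolding Q_def Qi_def using that by (simp add: blk_mult[OF i01]) (rule blk_cong; simp add: field_simps power2_eq_square)
    finally show ?thesis by (simp add: act_coset)
  qed
  have inS: "coset (g ** K s) \<in> {c (1/2) | c. connecting_curve (coset g) (coset g) c}" if "s \<noteq> 0" for s
  proof -
    let ?c = "\<lambda>t. act (mexp (t *\<^sub>R X s)) (coset g)"
    have sl: "X s \<in> slR"
      unfolding slR_def mem_Collect_eq X_def trace_conj[OF PP1[OF that]] by (rule trace_rot[OF i01])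
    have c0: "?c 0 = coset g" using curve[OF that, of 0] I1[symmetric] by simp
    have RR: "blk i0 i1 (-1) 0 0 (-1) 1 ** blk i0 i1 (-1) 0 0 (-1) 1 = (mat 1 :: real^'n^'n)"
      unfolding I1 by (simp add: blk_mult[OF i01])
    have "?c 1 = coset (g ** blk i0 i1 (-1) 0 0 (-1) 1)" using curve[OF that, of 1] by simp
    then have c1: "?c 1 = coset g" using coset_absorb[OF R_SLZ[OF i01] RR] by simp
    have ch: "?c (1/2) = coset (g ** K s)" using curve[OF that, of "1/2"] unfolding K_def by simp
    have cc: "connecting_curve (coset g) (coset g) ?c"
      unfolding connecting_curve_def
      apply (intro conjI)
        apply (rule bexI[OF _ sl]) apply (rule allI, rule refl)
      using c0 c1 by simp_all
    show ?thesis unfolding mem_Collect_eq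
      apply (rule exI[of _ ?c]) using cc ch by simp
  qed
  have inj: "s = t" if st: "s > 0" "t > 0" and eq: "coset (g ** K s) = coset (g ** K t)" for s t
  proof -
    have "g ** K s \<in> coset (g ** K s)" unfolding coset_def using I_SLZ by force
    then obtain h where h: "h \<in> SLZ" "g ** K s = g ** K t ** h" using eq unfolding coset_def by auto
    then have "gi ** (g ** K s) = gi ** (g ** K t ** h)" by simp
    then have h2: "K s = K t ** h" using gi by (simp add: matrix_mul_assoc)
    have KvK: "Kv t ** K t = mat 1" unfolding Kv_def K_def I1 using st
      by (simp add: blk_mult[OF i01])
    have "h = Kv t ** K s" using h2 KvK by (simp add: matrix_mul_assoc)
    also have "\<dots> = blk i0 i1 (t^2/s^2) 0 0 (s^2/t^2) 1" unfolding Kv_def K_def using st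
      by (simp add: blk_mult[OF i01])
    finally have hh: "h = blk i0 i1 (t^2/s^2) 0 0 (s^2/t^2) 1" .
    have "t^2/s^2 \<in> \<int>" "s^2/t^2 \<in> \<int>"
      using h(1) unfolding SLZ_def hh by (metis (mono_tags, lifting) blk_00[OF i01] blk_11[OF i01] mem_Collect_eq)+
    then have "t^2 = s^2" using st by (intro ints_ratio) auto
    then show ?thesis using st by (simp add: power2_eq_iff_nonneg)
  qed
  let ?f = "\<lambda>k::nat. coset (g ** K (real (Suc k)))"
  have "range ?f \<subseteq> {c (1/2) | c. connecting_curve (coset g) (coset g) c}"
    using inS by auto
  then have "finite (range ?f)" using fin unfolding midpoint_blockable_def by (rule finite_subset)
  moreover have "inj ?f"
  proof (rule injI)
    fix x y :: nat
    assume "?f x = ?f y"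
    then have "real (Suc x) = real (Suc y)" by (intro inj) auto
    then show "x = y" by simp
  qed
  ultimately show False using finite_imageD by blast
qed


theorem proposition6p3:
  assumes "CARD('n::finite) \<ge> 2"
  shows "(\<exists>m1 \<in> (Mspace :: (real^'n^'n) set set). \<exists>m2 \<in> Mspace. \<not> midpoint_blockable m1 m2)
       \<and> (\<forall>m \<in> (Mspace :: (real^'n^'n) set set). \<not> midpoint_blockable_away_from_itself m)"
proof -
  obtain i0 i1 :: 'n where i01: "i0 \<noteq> i1"
  proof -
    have "\<not> (\<forall>a\<in>(UNIV::'n set). \<forall>b\<in>UNIV. a = b)"
      using assms card_le_Suc0_iff_eq[of "UNIV::'n set"] by simp
    then obtain a b :: 'n where "a \<noteq> b" by auto
    then show ?thesis using that by blast
  qed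
  have all: "\<forall>m \<in> (Mspace :: (real^'n^'n) set set). \<not> midpoint_blockable_away_from_itself m"
  proof
    fix m :: "(real^'n^'n) set" assume "m \<in> Mspace"
    then obtain g where g: "g \<in> SLR" "m = coset g" unfolding Mspace_def by auto
    then have "det g = 1" unfolding SLR_def by simp
    then show "\<not> midpoint_blockable_away_from_itself m"
      unfolding midpoint_blockable_away_from_itself_def g(2) by (rule main_lemma[OF i01])
  qed
  have "coset (mat 1) \<in> (Mspace :: (real^'n^'n) set set)"
    unfolding Mspace_def SLR_def by (rule imageI) simp
  moreover have "\<not> midpoint_blockable (coset (mat 1)) (coset (mat 1 :: real^'n^'n))"
    using all calculation unfolding midpoint_blockable_away_from_itself_def by blast
  ultimately show ?thesis using all by blast
qed

end
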